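(* Let $n\ge2$ and let $\mathsf u$ be any subword of $\bm\lambda_n$. Write $\mathsf r^{\mathsf u}=[r_1,\dots,r_m]$ and let $i_j$ denote the index (position in $\bm\lambda_n$) of the skip corresponding to $r_j$. Then for each $j$, $$(r_1\cdots r_{j-1})\,r_j\,(r_{j-1}\cdots r_1)=\Big(\!\Big(0,\; i_j+\Big\lfloor \tfrac{i_j-1}{n-1}\Big\rfloor\Big)\!\Big).$$
   Context: $\widetilde S_n$ is the group, under composition, of bijections $w:\mathbb Z\to\mathbb Z$ with $w(i+n)=w(i)+n$ and $\sum_{i=1}^n w(i)=\binom{n+1}2$. For $i\not\equiv j\pmod n$, $(\!(i,j)\!)$ swaps $i+kn$ and $j+kn$ for all $k\in\mathbb Z$; $s_i=(\!(i,i+1)\!)$, $i\in\{0,\dots,n-1\}$. $\bm\lambda_n$ is the word $[s_0,\dots,s_{n-1}]$ repeated $n-1$ times with $j$-th letter $\sigma_j=s_{(j-1)\bmod n}$ (index in $\{0,\dots,n-1\}$). A subword is $\mathsf u=[u_1,\dots,u_{n(n-1)}]$ with $u_j\in\{\sigma_j,e\}$; $j$ is a skip if $u_j=e$. $u_{(j)}=u_1\cdots u_j$, $u_{(0)}=e$. $\textsc{inv}(\mathsf u)=[t_1,\dots,t_{n(n-1)}]$ with $t_j=u_{(j-1)}\sigma_ju_{(j-1)}^{-1}$, and $\mathsf r^{\mathsf u}$ is the subsequence of the $t_j$ over skips $j$, in increasing order of $j$. *)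

theory Defs
  imports Main
begin

text \<open>Affine permutations are represented as functions int => int; the group
 product is composition, (u v)(x) = u (v x).\<close>

text \<open>The affine transposition ((i,j)) (for i, j not congruent mod n):
 swaps i + k n and j + k n for all k.\<close>
definition atransp :: "nat \<Rightarrow> int \<Rightarrow> int \<Rightarrow> (int \<Rightarrow> int)" where
  "atransp n i j = (\<lambda>x. if x mod int n = i mod int n then x - i + j
                        else if x mod int n = j mod int n then x - j + i else x)"

definition sref :: "nat \<Rightarrow> int \<Rightarrow> (int \<Rightarrow> int)" where
  "sref n i = atransp n i (i + 1)"

text \<open>j-th letter (j >= 1) of the word lambda_n: sigma_j = s_{(j-1) mod n}.\<close>
definition sigma :: "nat \<Rightarrow> nat \<Rightarrow> (int \<Rightarrow> int)" where
  "sigma n j = sref n ((int j - 1) mod int n)"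

definition lamlen :: "nat \<Rightarrow> nat" where
  "lamlen n = n * (n - 1)"

text \<open>A subword of lambda_n: list [u_1,...,u_{n(n-1)}] (0-based list index j-1)
 with u_j in {sigma_j, e}.\<close>
definition is_subword :: "nat \<Rightarrow> (int \<Rightarrow> int) list \<Rightarrow> bool" where
  "is_subword n us \<longleftrightarrow> length us = lamlen n \<and>
     (\<forall>j\<in>{1..lamlen n}. us ! (j - 1) = sigma n j \<or> us ! (j - 1) = id)"

definition lprod :: "(int \<Rightarrow> int) list \<Rightarrow> (int \<Rightarrow> int)" where
  "lprod xs = foldr (\<circ>) xs id"

definition pref :: "(int \<Rightarrow> int) list \<Rightarrow> nat \<Rightarrow> (int \<Rightarrow> int)" where
  "pref us j = lprod (take j us)"

definition tinv :: "nat \<Rightarrow> (int \<Rightarrow> int) list \<Rightarrow> nat \<Rightarrow> (int \<Rightarrow> int)" where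
  "tinv n us j = pref us (j - 1) \<circ> sigma n j \<circ> inv (pref us (j - 1))"

definition skips :: "nat \<Rightarrow> (int \<Rightarrow> int) list \<Rightarrow> nat list" where
  "skips n us = filter (\<lambda>j. us ! (j - 1) = id) [1..<lamlen n + 1]"

definition rseq :: "nat \<Rightarrow> (int \<Rightarrow> int) list \<Rightarrow> (int \<Rightarrow> int) list" where
  "rseq n us = map (tinv n us) (skips n us)"

end

theory Submission imports Defs begin

lemma per_mult:
  assumes "\<And>x. w (x + int n) = w x + int n"
  shows "w (x + k * int n) = w x + k * int n"
proof (induction k rule: int_induct[where k=0])
  case base then show ?case by simp
next
  case (step1 i)
  have "w (x + (i+1) * int n) = w ((x + i*int n) + int n)" by (simp add: algebra_simps)
  also have "... = w (x + i*int n) + int n" using assms by blast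
  also have "... = w x + (i+1) * int n" using step1 by (simp add: algebra_simps)
  finally show ?case .
next
  case (step2 i)
  have "w x + i * int n = w ((x + (i-1)*int n) + int n)" using step2 by (simp add: algebra_simps)
  also have "... = w (x + (i-1)*int n) + int n" using assms by simp
  finally show ?case by (simp add: algebra_simps)
qed

lemma mod_eq_ex: "((x::int) mod N = a mod N) \<longleftrightarrow> (\<exists>k. x = a + k*N)"
proof
  assume "x mod N = a mod N"
  then have "N dvd x - a" by (simp add: mod_eq_dvd_iff)
  then obtain k where "x - a = N * k" by (auto elim: dvdE)
  then show "\<exists>k. x = a + k*N" by (intro exI[of _ k]) (simp add: algebra_simps)
next
  assume "\<exists>k. x = a + k*N"
  then show "x mod N = a mod N" by auto
qed

lemma per_equiv:
  assumes per: "\<And>x. w (x + int n) = w x + int n"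
  and vw: "\<And>x. v (w x) = x"
  shows "(y mod int n = a mod int n) \<longleftrightarrow> (w y mod int n = w a mod int n)"
proof
  assume "y mod int n = a mod int n"
  then obtain k where "y = a + k * int n" using mod_eq_ex by blast
  then have "w y = w a + k * int n" using per_mult[of w n, OF per] by simp
  then show "w y mod int n = w a mod int n" by simp
next
  assume "w y mod int n = w a mod int n"
  then obtain k where "w y = w a + k * int n" using mod_eq_ex by blast
  then have "w y = w (a + k * int n)" using per_mult[of w n, OF per] by simp
  then have "v (w y) = v (w (a + k * int n))" by simp
  then have "y = a + k * int n" using vw by simp
  then show "y mod int n = a mod int n" by simp
qed

lemma conj_atransp:
  assumes per: "\<And>x. w (x + int n) = w x + int n"
  and wv: "\<And>x. w (v x) = x" and vw: "\<And>x. v (w x) = x"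
  shows "w \<circ> atransp n a b \<circ> v = atransp n (w a) (w b)"
proof
  fix x
  define y where "y = v x"
  have xy: "x = w y" using wv y_def by simp
  have ea: "(y mod int n = a mod int n) \<longleftrightarrow> (w y mod int n = w a mod int n)"
    by (rule per_equiv[OF per vw])
  have eb: "(y mod int n = b mod int n) \<longleftrightarrow> (w y mod int n = w b mod int n)"
    by (rule per_equiv[OF per vw])
  have g: "w (atransp n a b y) = atransp n (w a) (w b) (w y)"
  proof (cases "y mod int n = a mod int n")
    case True
    then obtain k where k: "y = a + k * int n" using mod_eq_ex by blast
    have 1: "w y = w a + k * int n" using k per_mult[of w n, OF per] by simp
    have 2: "w (b + k * int n) = w b + k * int n" using per_mult[of w n, OF per] by simp
    have l: "atransp n a b y = b + k * int n" using True k by (simp add: atransp_def)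
    have r: "atransp n (w a) (w b) (w y) = w y - w a + w b"
      using ea[THEN iffD1, OF True] by (simp add: atransp_def)
    show ?thesis by (simp only: l r 2) (simp add: 1)
  next
    case F: False
    have F': "w y mod int n \<noteq> w a mod int n" using F ea by blast
    show ?thesis
    proof (cases "y mod int n = b mod int n")
      case True
      then obtain k where k: "y = b + k * int n" using mod_eq_ex by blast
      have 1: "w y = w b + k * int n" using k per_mult[of w n, OF per] by simp
      have 2: "w (a + k * int n) = w a + k * int n" using per_mult[of w n, OF per] by simp
      have l: "atransp n a b y = a + k * int n" using True F k by (simp add: atransp_def)
      have r: "atransp n (w a) (w b) (w y) = w y - w b + w a"
        using eb[THEN iffD1, OF True] F' by (simp add: atransp_def)
      show ?thesis by (simp only: l r 2) (simp add: 1)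
    next
      case False
      have F'': "w y mod int n \<noteq> w b mod int n" using False eb by blast
      have l: "atransp n a b y = y" using False F by (simp add: atransp_def)
      have r: "atransp n (w a) (w b) (w y) = w y" using F' F'' by (simp add: atransp_def)
      show ?thesis unfolding l r ..
    qed
  qed
  show "(w \<circ> atransp n a b \<circ> v) x = atransp n (w a) (w b) x"
    using g unfolding xy by (simp add: vw)
qed

lemma atransp_invol:
  assumes "a mod int n \<noteq> b mod int n"
  shows "atransp n a b \<circ> atransp n a b = id"
proof
  fix x
  show "(atransp n a b \<circ> atransp n a b) x = id x"
  proof (cases "x mod int n = a mod int n")
    case True
    then obtain k where "x = a + k * int n" using mod_eq_ex by blast
    then have "x - a + b = b + k * int n" by simp
    then have "(x - a + b) mod int n = b mod int n" by simp
    then show ?thesis using True assms by (simp add: atransp_def)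
  next
    case F: False
    show ?thesis
    proof (cases "x mod int n = b mod int n")
      case True
      then obtain k where "x = b + k * int n" using mod_eq_ex by blast
      then have "x - b + a = a + k * int n" by simp
      then have "(x - b + a) mod int n = a mod int n" by simp
      then show ?thesis using True F assms by (simp add: atransp_def)
    qed (use F in \<open>simp add: atransp_def\<close>)
  qed
qed

lemma mod_succ_ne:
  assumes "n \<ge> 2" shows "(a::int) mod int n \<noteq> (a + 1) mod int n"
proof
  assume "a mod int n = (a + 1) mod int n"
  then have "int n dvd a - (a+1)" by (simp add: mod_eq_dvd_iff)
  then have "int n dvd 1" by (metis dvd_minus_iff minus_diff_eq add_diff_cancel_left')
  then show False using assms by simp
qed

lemma sigma_invol: "n \<ge> 2 \<Longrightarrow> sigma n j \<circ> sigma n j = id"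
  unfolding sigma_def sref_def by (rule atransp_invol[OF mod_succ_ne])

lemma atransp_cong:
  assumes "i mod int n = i' mod int n" "j mod int n = j' mod int n" "j - i = j' - i'"
  shows "atransp n i j = atransp n i' j'"
proof
  fix x
  have "x - i + j = x - i' + j'" "x - j + i = x - j' + i'" using assms(3) by auto
  then show "atransp n i j x = atransp n i' j' x" using assms unfolding atransp_def by simp
qed


lemma lprod_Nil[simp]: "lprod [] = id" by (simp add: lprod_def)
lemma lprod_Cons[simp]: "lprod (x # xs) = x \<circ> lprod xs" by (simp add: lprod_def)
lemma lprod_append[simp]: "lprod (xs @ ys) = lprod xs \<circ> lprod ys"
  by (induction xs) auto

lemma lprod_invol:
  assumes "\<forall>f\<in>set xs. f \<circ> f = id"
  shows "lprod xs \<circ> lprod (rev xs) = id \<and> lprod (rev xs) \<circ> lprod xs = id"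
  using assms
proof (induction xs)
  case Nil then show ?case by simp
next
  case (Cons x xs)
  have hx: "x \<circ> x = id" using Cons.prems by (meson list.set_intros(1))
  have "lprod xs \<circ> lprod (rev xs) = id \<and> lprod (rev xs) \<circ> lprod xs = id"
    using Cons.IH Cons.prems by (meson list.set_intros(2))
  then have h: "lprod xs \<circ> lprod (rev xs) = id" "lprod (rev xs) \<circ> lprod xs = id" "x \<circ> x = id"
    using hx by blast+
  have p1: "\<And>y. lprod xs (lprod (rev xs) y) = y" using h(1) by (metis comp_apply id_apply)
  have p2: "\<And>y. lprod (rev xs) (lprod xs y) = y" using h(2) by (metis comp_apply id_apply)
  have p3: "\<And>y. x (x y) = y" using h(3) by (metis comp_apply id_apply)
  show ?case by (simp add: fun_eq_iff p1 p2 p3)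
qed

lemma lprod_inv:
  assumes "\<forall>f\<in>set xs. f \<circ> f = id"
  shows "inv (lprod xs) = lprod (rev xs)"
  using lprod_invol[OF assms] by (intro inv_unique_comp) auto

lemma lprod_conj:
  assumes "\<And>x. t (t' x) = x" "\<And>x. t' (t x) = x"
  shows "lprod (map (\<lambda>f. t \<circ> f \<circ> t') xs) = t \<circ> lprod xs \<circ> t'"
proof (induction xs)
  case Nil then show ?case using assms by (auto simp: fun_eq_iff)
next
  case (Cons x xs) then show ?case using assms by (auto simp: fun_eq_iff)
qed

definition tau :: "int \<Rightarrow> int" where "tau x = x + 1"
definition taui :: "int \<Rightarrow> int" where "taui x = x - 1"

lemma sigma_shift:
  assumes "n \<ge> 2" "q \<ge> 1"
  shows "sigma n (Suc q) = tau \<circ> sigma n q \<circ> taui"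
proof -
  have "tau \<circ> sigma n q \<circ> taui = atransp n (tau ((int q - 1) mod int n)) (tau ((int q - 1) mod int n + 1))"
    unfolding sigma_def sref_def
    by (rule conj_atransp) (auto simp: tau_def taui_def)
  also have "... = atransp n ((int (Suc q) - 1) mod int n) ((int (Suc q) - 1) mod int n + 1)"
    apply (rule atransp_cong)
    apply (simp add: tau_def mod_add_left_eq mod_add_right_eq add.commute)
    apply (simp add: tau_def mod_add_left_eq mod_add_right_eq add.commute)
    apply (simp add: tau_def)
    done
  finally show ?thesis unfolding sigma_def sref_def by simp
qed

definition cidx :: "nat \<Rightarrow> nat \<Rightarrow> int" where
  "cidx n p = int p + (int p - 1) div (int n - 1)"

lemma cidx_step:
  assumes "n \<ge> 2" "p \<ge> 1"
  shows "cidx n p mod int n \<noteq> 0 \<and> atransp n 0 1 (cidx n p + 1) = cidx n (Suc p)"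
proof -
  define m where "m = int n - 1"
  have m: "m \<ge> 1" using assms m_def by simp
  define q where "q = (int p - 1) div m"
  define r where "r = (int p - 1) mod m"
  have pqr: "int p - 1 = q * m + r" unfolding q_def r_def by simp
  have r: "0 \<le> r" "r < m" using m unfolding r_def by auto
  have c: "cidx n p = q * int n + (r + 1)" unfolding cidx_def q_def[symmetric] m_def[symmetric]
    using pqr m_def by (simp add: algebra_simps)
  have cm: "cidx n p mod int n = r + 1"
    using c r m_def by (simp add: mod_pos_pos_trivial)
  have nz: "cidx n p mod int n \<noteq> 0" using cm r by simp
  show ?thesis
  proof (cases "r = m - 1")
    case True
    have pe: "int p = (q+1) * m" using pqr True by (simp add: algebra_simps)
    have d: "int p div m = q + 1" using pe m by simp
    have "cidx n (Suc p) = int p + 1 + int p div m" unfolding cidx_def m_def by simp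
    also have "... = (q+1) * m + 1 + (q + 1)" using pe d by simp
    also have "... = q * int n + int n + 1" by (simp add: m_def algebra_simps)
    finally have cs: "cidx n (Suc p) = q * int n + int n + 1" .
    have "(cidx n p + 1) mod int n = 0" using c True m_def by simp
    then have "atransp n 0 1 (cidx n p + 1) = cidx n p + 2" by (simp add: atransp_def)
    moreover have "cidx n p + 2 = q * int n + int n + 1" using c True m_def by simp
    ultimately show ?thesis using cs nz by simp
  next
    case False
    have pe: "int p = r + 1 + q * m" using pqr by (simp add: algebra_simps)
    have "(r + 1) div m = 0" using r False by simp
    then have d: "int p div m = q" using pe m by simp
    have "cidx n (Suc p) = int p + 1 + int p div m" unfolding cidx_def m_def by simp
    then have cs: "cidx n (Suc p) = cidx n p + 1"
      using d unfolding cidx_def q_def m_def by simp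
    have "(cidx n p + 1) mod int n = r + 2"
      using c r False m_def by (simp add: mod_pos_pos_trivial add.assoc)
    moreover have "r + 2 \<noteq> 1" "r + 2 \<noteq> 0" using r by auto
    ultimately have "atransp n 0 1 (cidx n p + 1) = cidx n p + 1" using assms(1)
      by (simp add: atransp_def)
    then show ?thesis using cs nz by simp
  qed
qed


lemma atransp_per: "atransp n a b (x + int n) = atransp n a b x + int n"
  by (simp add: atransp_def)
lemma atransp_per2: "atransp n a b (x + int n + 1) = atransp n a b (x + 1) + int n"
  by (metis atransp_per add.commute add.assoc)

lemma sigma1: "sigma n 1 = atransp n 0 1" "sigma n (Suc 0) = atransp n 0 1" by (simp_all add: sigma_def sref_def)

lemma s1_pt: "n \<ge> 2 \<Longrightarrow> atransp n 0 1 (atransp n 0 1 x) = x"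
  using atransp_invol[of 0 n 1] by (simp add: fun_eq_iff)

lemma claimB:
  assumes n: "n \<ge> 2" and p: "p \<ge> 1"
  shows "lprod (map (sigma n) [1..<p]) \<circ> sigma n p \<circ> lprod (rev (map (sigma n) [1..<p]))
         = atransp n 0 (cidx n p)"
  using p
proof (induction p rule: nat_induct_at_least)
  case base
  then show ?case by (simp add: sigma1(2) cidx_def)
next
  case (Suc p)
  define Wl where "Wl = map (sigma n) [1..<p]"
  have ti: "\<And>x. tau (taui x) = x" "\<And>x. taui (tau x) = x" by (auto simp: tau_def taui_def)
  have ups: "[1..<Suc p] = 1 # map Suc [1..<p]" using Suc.hyps
    by (simp add: upt_conv_Cons map_Suc_upt)
  have msh: "map (sigma n) (map Suc [1..<p]) = map (\<lambda>f. tau \<circ> f \<circ> taui) Wl"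
    unfolding Wl_def by (auto simp: sigma_shift[OF n])
  have W': "map (sigma n) [1..<Suc p] = sigma n 1 # map (\<lambda>f. tau \<circ> f \<circ> taui) Wl"
    using ups msh by simp
  have L1: "lprod (map (sigma n) [1..<Suc p]) = sigma n 1 \<circ> (tau \<circ> lprod Wl \<circ> taui)"
    unfolding W' using lprod_conj[OF ti] by simp
  have L2: "lprod (rev (map (sigma n) [1..<Suc p])) = (tau \<circ> lprod (rev Wl) \<circ> taui) \<circ> sigma n 1"
    unfolding W' using lprod_conj[OF ti, of "rev Wl"] by (simp add: rev_map)
  have S: "sigma n (Suc p) = tau \<circ> sigma n p \<circ> taui" using sigma_shift[OF n Suc.hyps] .
  have "lprod (map (sigma n) [1..<Suc p]) \<circ> sigma n (Suc p) \<circ> lprod (rev (map (sigma n) [1..<Suc p]))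
      = (sigma n 1 \<circ> tau) \<circ> (lprod Wl \<circ> sigma n p \<circ> lprod (rev Wl)) \<circ> (taui \<circ> sigma n 1)"
    unfolding L1 L2 S by (simp add: fun_eq_iff ti)
  also have "... = (sigma n 1 \<circ> tau) \<circ> atransp n 0 (cidx n p) \<circ> (taui \<circ> sigma n 1)"
    unfolding Wl_def Suc.IH by (rule refl)
  also have "... = atransp n ((sigma n 1 \<circ> tau) 0) ((sigma n 1 \<circ> tau) (cidx n p))"
    by (rule conj_atransp) (auto simp: sigma1 atransp_per atransp_per2 tau_def taui_def s1_pt[OF n])
  also have "... = atransp n 0 (cidx n (Suc p))"
  proof -
    have "(sigma n 1 \<circ> tau) 0 = 0" using n by (simp add: sigma1 tau_def atransp_def)
    moreover have "(sigma n 1 \<circ> tau) (cidx n p) = cidx n (Suc p)"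
      using cidx_step[OF n Suc.hyps] by (simp add: sigma1 tau_def)
    ultimately show ?thesis by simp
  qed
  finally show ?case .
qed

lemma pref_Suc: "k < length us \<Longrightarrow> pref us (Suc k) = pref us k \<circ> us ! k"
  by (simp add: pref_def take_Suc_conv_app_nth)

lemma pref_pts:
  assumes "\<forall>f\<in>set us. f \<circ> f = id"
  shows "\<And>y. pref us k (inv (pref us k) y) = y" "\<And>y. inv (pref us k) (pref us k y) = y"
proof -
  have A: "\<forall>f\<in>set (take k us). f \<circ> f = id" using assms by (meson in_set_takeD)
  have i: "inv (lprod (take k us)) = lprod (rev (take k us))" by (rule lprod_inv[OF A])
  show "\<And>y. pref us k (inv (pref us k) y) = y" "\<And>y. inv (pref us k) (pref us k y) = y"
    using lprod_invol[OF A] unfolding pref_def i by (simp_all add: fun_eq_iff)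
qed

lemma tinv_invol:
  assumes "n \<ge> 2" "\<forall>f\<in>set us. f \<circ> f = id"
  shows "tinv n us q \<circ> tinv n us q = id"
proof -
  have s: "\<And>y. sigma n q (sigma n q y) = y" using sigma_invol[OF assms(1)] by (simp add: fun_eq_iff)
  show ?thesis unfolding tinv_def using pref_pts[OF assms(2)] s by (simp add: fun_eq_iff)
qed

lemma claimA:
  assumes n: "n \<ge> 2" and U: "\<forall>f\<in>set us. f \<circ> f = id"
    and us: "\<And>i. i < length us \<Longrightarrow> us ! i = sigma n (Suc i) \<or> us ! i = id"
  shows "k \<le> length us \<Longrightarrow> pref us k = lprod (rev (map (tinv n us) (filter (\<lambda>p. us ! (p - 1) = id) [1..<Suc k])))
            \<circ> lprod (map (sigma n) [1..<Suc k])"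
proof (induction k)
  case 0
  then show ?case by (simp add: pref_def)
next
  case (Suc k)
  then have k: "k < length us" by simp
  have IH: "pref us k = lprod (rev (map (tinv n us) (filter (\<lambda>p. us ! (p - 1) = id) [1..<Suc k])))
            \<circ> lprod (map (sigma n) [1..<Suc k])" by (rule Suc.IH) (use Suc.prems in simp)
  have up: "[1..<Suc (Suc k)] = [1..<Suc k] @ [Suc k]" by simp
  define RL where "RL = lprod (rev (map (tinv n us) (filter (\<lambda>p. us ! (p - 1) = id) [1..<Suc k])))"
  define W where "W = lprod (map (sigma n) [1..<Suc k])"
  have IH': "pref us k = RL \<circ> W" using IH unfolding RL_def W_def .
  have W2: "lprod (map (sigma n) [1..<Suc (Suc k)]) = W \<circ> sigma n (Suc k)"
    unfolding up W_def by simp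
  show ?case
  proof (cases "us ! k = id")
    case True
    have f: "filter (\<lambda>p. us ! (p - 1) = id) [1..<Suc (Suc k)]
          = filter (\<lambda>p. us ! (p - 1) = id) [1..<Suc k] @ [Suc k]"
      unfolding up using True by simp
    have R2: "lprod (rev (map (tinv n us) (filter (\<lambda>p. us ! (p - 1) = id) [1..<Suc (Suc k)])))
        = tinv n us (Suc k) \<circ> RL"
      unfolding f RL_def by simp
    have s: "\<And>y. sigma n (Suc k) (sigma n (Suc k) y) = y" using sigma_invol[OF n] by (simp add: fun_eq_iff)
    have "tinv n us (Suc k) \<circ> RL \<circ> (W \<circ> sigma n (Suc k)) = tinv n us (Suc k) \<circ> pref us k \<circ> sigma n (Suc k)"
      unfolding IH' by (simp add: o_assoc)
    also have "... = pref us k"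
      unfolding tinv_def using pref_pts[OF U] s by (simp add: fun_eq_iff)
    also have "... = pref us (Suc k)" using pref_Suc[OF k] True by simp
    finally show ?thesis unfolding R2 W2 by (metis comp_assoc)
  next
    case False
    then have e: "us ! k = sigma n (Suc k)" using us[OF k] by blast
    have f: "filter (\<lambda>p. us ! (p - 1) = id) [1..<Suc (Suc k)]
          = filter (\<lambda>p. us ! (p - 1) = id) [1..<Suc k]"
      unfolding up using False by simp
    show ?thesis unfolding f W2 pref_Suc[OF k] IH' RL_def[symmetric] e by (simp add: o_assoc)
  qed
qed

lemma take_sorted:
  fixes xs :: "nat list"
  shows "sorted_wrt (<) xs \<Longrightarrow> j < length xs \<Longrightarrow> take j xs = filter (\<lambda>x. x < xs ! j) xs"
proof (induction xs arbitrary: j)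
  case Nil then show ?case by simp
next
  case (Cons a xs)
  show ?case
  proof (cases j)
    case 0
    then show ?thesis using Cons.prems by (auto intro!: filter_False[symmetric])
  next
    case (Suc j')
    then have "take j' xs = filter (\<lambda>x. x < xs ! j') xs" using Cons by simp
    moreover have "a < xs ! j'" using Cons.prems Suc by (simp)
    ultimately show ?thesis using Suc by simp
  qed
qed

lemma filter_upt_less: "p \<le> b \<Longrightarrow> filter (\<lambda>x. x < p) [a..<b] = [a..<p]"
proof (induction b)
  case 0 then show ?case by simp
next
  case (Suc b)
  show ?case
  proof (cases "p \<le> b")
    case True then show ?thesis using Suc by simp
  next
    case False
    then have "p = Suc b" using Suc.prems by simp
    then show ?thesis by (auto intro: filter_True)
  qed
qed

theorem lemma5p16:
  fixes n :: nat and us :: "(int \<Rightarrow> int) list" and j :: nat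
  assumes "n \<ge> 2"
    and "is_subword n us"
    and "j < length (rseq n us)"
  shows "lprod (take j (rseq n us)) \<circ> (rseq n us ! j) \<circ> lprod (rev (take j (rseq n us)))
       = atransp n 0 (int (skips n us ! j) + (int (skips n us ! j) - 1) div (int n - 1))"
proof -
  note n = assms(1)
  have len: "length us = lamlen n" using assms(2) unfolding is_subword_def by simp
  have us: "\<And>i. i < length us \<Longrightarrow> us ! i = sigma n (Suc i) \<or> us ! i = id"
  proof -
    fix i assume "i < length us"
    then have "Suc i \<in> {1..lamlen n}" using len by simp
    then show "us ! i = sigma n (Suc i) \<or> us ! i = id"
      using assms(2) unfolding is_subword_def by (metis diff_Suc_1)
  qed
  have U: "\<forall>f\<in>set us. f \<circ> f = id"
  proof
    fix f assume "f \<in> set us"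
    then obtain i where i: "i < length us" "f = us ! i" by (metis in_set_conv_nth)
    then show "f \<circ> f = id" using us[OF i(1)] sigma_invol[OF n] by auto
  qed
  define sk where "sk = (\<lambda>p. us ! (p - 1) = id)"
  define S where "S = skips n us"
  have S_def': "S = filter sk [1..<Suc (lamlen n)]" unfolding S_def skips_def sk_def by simp
  have jS: "j < length S" using assms(3) unfolding S_def rseq_def by simp
  define p where "p = S ! j"
  have pin: "p \<in> set S" using jS p_def by simp
  then have p1: "1 \<le> p" "p \<le> lamlen n" "sk p" unfolding S_def' by auto
  have tS: "take j S = filter sk [1..<p]"
  proof -
    have "take j S = filter (\<lambda>x. x < p) S"
      unfolding p_def by (rule take_sorted[OF _ jS]) (metis S_def' sorted_wrt_filter sorted_wrt_upt)
    also have "... = filter (\<lambda>x. sk x \<and> x < p) [1..<Suc (lamlen n)]"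
      unfolding S_def' by simp
    also have "... = filter sk (filter (\<lambda>x. x < p) [1..<Suc (lamlen n)])"
      by (simp add: conj_commute)
    also have "... = filter sk [1..<p]" using p1 by (simp add: filter_upt_less)
    finally show ?thesis .
  qed
  define L where "L = map (tinv n us) (filter sk [1..<p])"
  define Wl where "Wl = map (sigma n) [1..<p]"
  have tk: "take j (rseq n us) = L" unfolding rseq_def L_def S_def[symmetric] take_map tS ..
  have rj: "rseq n us ! j = tinv n us p" unfolding rseq_def S_def[symmetric] p_def using jS by simp
  have up: "[1..<Suc (p - 1)] = [1..<p]" using p1 by simp
  have A: "pref us (p - 1) = lprod (rev L) \<circ> lprod Wl"
    using claimA[OF n U us, of "p - 1"] p1 len unfolding up L_def Wl_def sk_def by simp
  have Linv: "\<forall>f\<in>set L. f \<circ> f = id" unfolding L_def using tinv_invol[OF n U] by auto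
  have Winv: "\<forall>f\<in>set Wl. f \<circ> f = id" unfolding Wl_def using sigma_invol[OF n] by auto
  have l1: "\<And>y. lprod L (lprod (rev L) y) = y" "\<And>y. lprod (rev L) (lprod L y) = y"
    using lprod_invol[OF Linv] by (simp_all add: fun_eq_iff)
  have w1: "\<And>y. lprod Wl (lprod (rev Wl) y) = y" "\<And>y. lprod (rev Wl) (lprod Wl y) = y"
    using lprod_invol[OF Winv] by (simp_all add: fun_eq_iff)
  have pp: "\<And>y. inv (pref us (p - 1)) (pref us (p - 1) y) = y" using pref_pts[OF U] by blast
  have Pi: "\<And>y. inv (pref us (p - 1)) y = lprod (rev Wl) (lprod L y)"
  proof -
    fix y
    have "pref us (p - 1) (lprod (rev Wl) (lprod L y)) = y" unfolding A using w1 l1 by simp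
    then have "inv (pref us (p - 1)) y = inv (pref us (p - 1)) (pref us (p - 1) (lprod (rev Wl) (lprod L y)))"
      by simp
    then show "inv (pref us (p - 1)) y = lprod (rev Wl) (lprod L y)" using pp by simp
  qed
  have "lprod (take j (rseq n us)) \<circ> (rseq n us ! j) \<circ> lprod (rev (take j (rseq n us)))
      = lprod Wl \<circ> sigma n p \<circ> lprod (rev Wl)"
    unfolding tk rj tinv_def
    apply (rule ext)
    apply (simp only: comp_apply Pi)
    apply (simp only: A comp_apply l1 w1)
    done
  also have "... = atransp n 0 (cidx n p)" unfolding Wl_def by (rule claimB[OF n p1(1)])
  finally show ?thesis unfolding cidx_def p_def S_def .
qed

end
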